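(* Let $G$ be a group acting on a set $X$ on the left, and let $\mathfrak{F}$ be any family of subsets of $X$. Then the filter $\mathfrak{R}_{\mathfrak{F}}$ on $G$ is left topological.
   Context: For $A\in\mathfrak{F}$ let $\Delta_{\mathfrak{F}}(A)=\{g\in G: gB\subseteq A$ for some $B\in\mathfrak{F}$ with $B\subseteq A\}$ (note $e\in\Delta_{\mathfrak{F}}(A)$). $\mathfrak{R}_{\mathfrak{F}}$ is the filter on $G$ with base consisting of the sets $\bigcap_{A\in\mathfrak{F}'}\Delta_{\mathfrak{F}}(A)$, $\mathfrak{F}'$ a finite subfamily of $\mathfrak{F}$. A filter $\varphi$ on $G$ is left topological if there is a topology on $G$ in which every left shift $x\mapsto gx$ is continuous and for which $\varphi$ is the filter of neighbourhoods of the identity $e$ (i.e. $\varphi$ is a base at $e$). *)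

theory Defs
  imports "HOL-Algebra.Group_Action" "HOL-Analysis.Abstract_Topology"
begin

definition Delta_fam :: "('g, 'm) monoid_scheme \<Rightarrow> ('g \<Rightarrow> 'x \<Rightarrow> 'x) \<Rightarrow> 'x set set \<Rightarrow> 'x set \<Rightarrow> 'g set"
  where "Delta_fam G act F A = {g \<in> carrier G. \<exists>B\<in>F. B \<subseteq> A \<and> act g ` B \<subseteq> A}"

definition R_filter :: "('g, 'm) monoid_scheme \<Rightarrow> ('g \<Rightarrow> 'x \<Rightarrow> 'x) \<Rightarrow> 'x set set \<Rightarrow> 'g set set"
  where "R_filter G act F =
    {U. U \<subseteq> carrier G \<and>
        (\<exists>F'. finite F' \<and> F' \<subseteq> F \<and> carrier G \<inter> (\<Inter>A\<in>F'. Delta_fam G act F A) \<subseteq> U)}"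

definition left_topological :: "('g, 'm) monoid_scheme \<Rightarrow> 'g set set \<Rightarrow> bool"
  where "left_topological G \<Phi> \<longleftrightarrow>
    (\<exists>T. topspace T = carrier G \<and>
         (\<forall>g\<in>carrier G. continuous_map T T (\<lambda>x. g \<otimes>\<^bsub>G\<^esub> x)) \<and>
         \<Phi> = {U. U \<subseteq> carrier G \<and> (\<exists>V. openin T V \<and> \<one>\<^bsub>G\<^esub> \<in> V \<and> V \<subseteq> U)})"

end

theory Submission
  imports Defs
begin

definition DD :: "('g, 'm) monoid_scheme \<Rightarrow> ('g \<Rightarrow> 'x \<Rightarrow> 'x) \<Rightarrow> 'x set set \<Rightarrow> 'x set set \<Rightarrow> 'g set"
  where "DD G act F F' = carrier G \<inter> (\<Inter>A\<in>F'. Delta_fam G act F A)"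

lemma DD_one:
  fixes G (structure)
  assumes "group_action G X act" "F \<subseteq> Pow X" "F' \<subseteq> F"
  shows "\<one>\<^bsub>G\<^esub> \<in> DD G act F F'"
proof -
  interpret group_action G X act by fact
  interpret group G using group_hom group_hom.axioms(1) by blast
  have one: "\<one>\<^bsub>G\<^esub> \<in> carrier G" by simp
  have "\<And>A. A \<in> F' \<Longrightarrow> \<one>\<^bsub>G\<^esub> \<in> Delta_fam G act F A"
  proof -
    fix A assume A: "A \<in> F'"
    hence AX: "A \<subseteq> X" using assms by auto
    have "act \<one>\<^bsub>G\<^esub> ` A = A"
    proof -
      have "\<And>x. x \<in> A \<Longrightarrow> act \<one>\<^bsub>G\<^esub> x = x" using id_eq_one AX
        by (metis restrict_apply' subsetD)
      thus ?thesis by force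
    qed
    thus "\<one>\<^bsub>G\<^esub> \<in> Delta_fam G act F A" unfolding Delta_fam_def using A assms(3) one by auto
  qed
  thus ?thesis unfolding DD_def using one by auto
qed

lemma DD_Un: "DD G act F (F1 \<union> F2) = DD G act F F1 \<inter> DD G act F F2"
  unfolding DD_def by auto

lemma DD_carrier: "DD G act F F' \<subseteq> carrier G"
  unfolding DD_def by auto

lemma DD_carrierD [dest]: "h \<in> DD G act F F' \<Longrightarrow> h \<in> carrier G"
  unfolding DD_def by auto

lemma DD_shift:
  fixes G (structure)
  assumes "group_action G X act" "F \<subseteq> Pow X" "finite F'" "F' \<subseteq> F" "w \<in> DD G act F F'"
  shows "\<exists>F''. finite F'' \<and> F'' \<subseteq> F \<and> (\<lambda>h. w \<otimes>\<^bsub>G\<^esub> h) ` DD G act F F'' \<subseteq> DD G act F F'"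
proof -
  interpret group_action G X act by fact
  interpret group G using group_hom group_hom.axioms(1) by blast
  have wc: "w \<in> carrier G" using assms(5) DD_carrier by auto
  have "\<forall>A\<in>F'. \<exists>B. B \<in> F \<and> B \<subseteq> A \<and> act w ` B \<subseteq> A"
    using assms(5) unfolding DD_def Delta_fam_def by auto
  then obtain B where B: "\<And>A. A \<in> F' \<Longrightarrow> B A \<in> F \<and> B A \<subseteq> A \<and> act w ` B A \<subseteq> A"
    by metis
  have "(\<lambda>h. w \<otimes> h) ` DD G act F (B ` F') \<subseteq> DD G act F F'"
  proof
    fix y assume "y \<in> (\<lambda>h. w \<otimes> h) ` DD G act F (B ` F')"
    then obtain h where h: "h \<in> DD G act F (B ` F')" and y: "y = w \<otimes> h" by auto
    have hc: "h \<in> carrier G" using h DD_carrier by auto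
    have "\<And>A. A \<in> F' \<Longrightarrow> w \<otimes> h \<in> Delta_fam G act F A"
    proof -
      fix A assume A: "A \<in> F'"
      have "h \<in> Delta_fam G act F (B A)" using h A unfolding DD_def by auto
      then obtain C where C: "C \<in> F" "C \<subseteq> B A" "act h ` C \<subseteq> B A"
        unfolding Delta_fam_def by auto
      have CX: "C \<subseteq> X" using C(1) assms(2) by auto
      have "act (w \<otimes> h) ` C = act w ` (act h ` C)"
        using composition_rule[OF _ wc hc] CX by (auto simp: image_iff subset_iff)
      also have "\<dots> \<subseteq> act w ` B A" using C(3) by auto
      also have "\<dots> \<subseteq> A" using B[OF A] by auto
      finally have im: "act (w \<otimes> h) ` C \<subseteq> A" .
      have CA: "C \<subseteq> A" using C(2) B[OF A] by blast
      have wh: "w \<otimes> h \<in> carrier G" using wc hc by simp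
      show "w \<otimes> h \<in> Delta_fam G act F A"
        unfolding Delta_fam_def using C(1) CA im wh by blast
    qed
    thus "y \<in> DD G act F F'" unfolding DD_def using y wc hc by auto
  qed
  moreover have "finite (B ` F')" using assms(3) by auto
  moreover have "B ` F' \<subseteq> F" using B by auto
  ultimately show ?thesis by blast
qed

theorem proposition5p5:
  fixes G (structure) and X :: "'x set" and act :: "'g \<Rightarrow> 'x \<Rightarrow> 'x" and F :: "'x set set"
  assumes "group_action G X act"
    and "F \<subseteq> Pow X"
  shows "left_topological G (R_filter G act F)"
proof -
  interpret group_action G X act by fact
  interpret group G using group_hom group_hom.axioms(1) by blast
  define P where "P = (\<lambda>W. W \<subseteq> carrier G \<and> (\<forall>x\<in>W. \<exists>F'. finite F' \<and> F' \<subseteq> F \<and> (\<lambda>h. x \<otimes> h) ` DD G act F F' \<subseteq> W))"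
  have PD: "thesis"
    if "P W" "x \<in> W" "\<And>F'. finite F' \<Longrightarrow> F' \<subseteq> F \<Longrightarrow> (\<lambda>h. x \<otimes> h) ` DD G act F F' \<subseteq> W \<Longrightarrow> thesis"
    for W x thesis
  proof -
    have "\<exists>F'. finite F' \<and> F' \<subseteq> F \<and> (\<lambda>h. x \<otimes> h) ` DD G act F F' \<subseteq> W"
      using that(1,2) unfolding P_def by blast
    then obtain F' where "finite F'" "F' \<subseteq> F" "(\<lambda>h. x \<otimes> h) ` DD G act F F' \<subseteq> W" by blast
    thus thesis using that(3) by blast
  qed
  have PC: "W \<subseteq> carrier G" if "P W" for W using that unfolding P_def by blast
  have top: "istopology P"
    unfolding istopology_def
  proof (intro conjI allI impI)
    fix S T assume S: "P S" and T: "P T"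
    show "P (S \<inter> T)" unfolding P_def
    proof (intro conjI ballI)
      show "S \<inter> T \<subseteq> carrier G" using PC[OF S] by blast
      fix x assume x: "x \<in> S \<inter> T"
      have xS: "x \<in> S" and xT: "x \<in> T" using x by auto
      obtain F1 where F1: "finite F1" "F1 \<subseteq> F" "(\<lambda>h. x \<otimes> h) ` DD G act F F1 \<subseteq> S"
        by (rule PD[OF S xS])
      obtain F2 where F2: "finite F2" "F2 \<subseteq> F" "(\<lambda>h. x \<otimes> h) ` DD G act F F2 \<subseteq> T"
        by (rule PD[OF T xT])
      show "\<exists>F'. finite F' \<and> F' \<subseteq> F \<and> (\<lambda>h. x \<otimes> h) ` DD G act F F' \<subseteq> S \<inter> T"
      proof (rule exI[of _ "F1 \<union> F2"], intro conjI)
        show "(\<lambda>h. x \<otimes> h) ` DD G act F (F1 \<union> F2) \<subseteq> S \<inter> T"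
          unfolding DD_Un using F1(3) F2(3) by blast
      qed (use F1 F2 in auto)
    qed
  next
    fix K assume K: "\<forall>S\<in>K. P S"
    show "P (\<Union>K)" unfolding P_def
    proof (intro conjI ballI)
      show "\<Union>K \<subseteq> carrier G" using K PC by blast
      fix x assume "x \<in> \<Union>K"
      then obtain S where SK: "S \<in> K" and xS: "x \<in> S" by auto
      have PS: "P S" using K SK by blast
      obtain F1 where "finite F1" "F1 \<subseteq> F" "(\<lambda>h. x \<otimes> h) ` DD G act F F1 \<subseteq> S"
        by (rule PD[OF PS xS])
      thus "\<exists>F'. finite F' \<and> F' \<subseteq> F \<and> (\<lambda>h. x \<otimes> h) ` DD G act F F' \<subseteq> \<Union>K"
        using \<open>S \<in> K\<close> by blast
    qed
  qed
  define T where "T = topology P"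
  have openT: "openin T W \<longleftrightarrow> P W" for W
    unfolding T_def using top by (simp add: topology_inverse')
  have Pcar: "P (carrier G)" unfolding P_def
    by (auto intro!: exI[of _ "{}"] simp: DD_def)
  have topsp: "topspace T = carrier G"
  proof -
    have "topspace T = \<Union>{W. P W}" unfolding topspace_def openT by simp
    also have "\<dots> = carrier G" using Pcar PC by blast
    finally show ?thesis .
  qed
  have cont: "continuous_map T T (\<lambda>x. g \<otimes> x)" if g: "g \<in> carrier G" for g
    unfolding continuous_map_def
  proof (intro conjI allI impI)
    show "(\<lambda>x. g \<otimes> x) \<in> topspace T \<rightarrow> topspace T" using g topsp by auto
    fix U assume U: "openin T U"
    show "openin T {x \<in> topspace T. g \<otimes> x \<in> U}"
      unfolding openT P_def topsp
    proof (intro conjI ballI)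
      show "{x \<in> carrier G. g \<otimes> x \<in> U} \<subseteq> carrier G" by auto
      fix x assume x: "x \<in> {x \<in> carrier G. g \<otimes> x \<in> U}"
      have PU: "P U" using U openT by blast
      have gx: "g \<otimes> x \<in> U" using x by blast
      obtain F1 where F1: "finite F1" "F1 \<subseteq> F" "(\<lambda>h. (g \<otimes> x) \<otimes> h) ` DD G act F F1 \<subseteq> U"
        by (rule PD[OF PU gx])
      have "(\<lambda>h. x \<otimes> h) ` DD G act F F1 \<subseteq> {x \<in> carrier G. g \<otimes> x \<in> U}"
      proof
        fix y assume "y \<in> (\<lambda>h. x \<otimes> h) ` DD G act F F1"
        then obtain h where h: "h \<in> DD G act F F1" "y = x \<otimes> h" by auto
        have hc: "h \<in> carrier G" using h DD_carrier by auto
        have "g \<otimes> y = (g \<otimes> x) \<otimes> h" using h hc g x by (simp add: m_assoc)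
        thus "y \<in> {x \<in> carrier G. g \<otimes> x \<in> U}" using F1(3) h hc x by auto
      qed
      thus "\<exists>F'. finite F' \<and> F' \<subseteq> F \<and> (\<lambda>h. x \<otimes> h) ` DD G act F F' \<subseteq> {x \<in> carrier G. g \<otimes> x \<in> U}"
        using F1 by blast
    qed
  qed
  have RF: "R_filter G act F = {U. U \<subseteq> carrier G \<and> (\<exists>F'. finite F' \<and> F' \<subseteq> F \<and> DD G act F F' \<subseteq> U)}"
    unfolding R_filter_def DD_def by simp
  have eq: "R_filter G act F = {U. U \<subseteq> carrier G \<and> (\<exists>V. openin T V \<and> \<one> \<in> V \<and> V \<subseteq> U)}"
    unfolding RF
  proof (rule Set.set_eqI, rule iffI)
    fix U assume "U \<in> {U. U \<subseteq> carrier G \<and> (\<exists>F'. finite F' \<and> F' \<subseteq> F \<and> DD G act F F' \<subseteq> U)}"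
    then obtain F' where U: "U \<subseteq> carrier G" "finite F'" "F' \<subseteq> F" "DD G act F F' \<subseteq> U" by blast
    define V where "V = {x \<in> carrier G. \<exists>F''. finite F'' \<and> F'' \<subseteq> F \<and> (\<lambda>h. x \<otimes> h) ` DD G act F F'' \<subseteq> U}"
    have "(\<lambda>h. \<one> \<otimes> h) ` DD G act F F' \<subseteq> U"
    proof
      fix y assume "y \<in> (\<lambda>h. \<one> \<otimes> h) ` DD G act F F'"
      then obtain h where h: "h \<in> DD G act F F'" "y = \<one> \<otimes> h" by blast
      have "h \<in> carrier G" using h(1) by (rule DD_carrierD)
      hence "y = h" using h(2) by simp
      thus "y \<in> U" using h(1) U(4) by blast
    qed
    hence "\<one> \<in> V" unfolding V_def using U by auto
    moreover have "V \<subseteq> U"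
    proof
      fix x assume "x \<in> V"
      hence "x \<in> carrier G \<and> (\<exists>F''. finite F'' \<and> F'' \<subseteq> F \<and> (\<lambda>h. x \<otimes> h) ` DD G act F F'' \<subseteq> U)"
        unfolding V_def by simp
      then obtain F'' where "x \<in> carrier G" "finite F''" "F'' \<subseteq> F" "(\<lambda>h. x \<otimes> h) ` DD G act F F'' \<subseteq> U"
        by blast
      moreover have "\<one> \<in> DD G act F F''" using DD_one[OF assms(1,2) \<open>F'' \<subseteq> F\<close>] .
      ultimately show "x \<in> U" by force
    qed
    moreover have "openin T V" unfolding openT P_def
    proof (intro conjI ballI)
      show "V \<subseteq> carrier G" unfolding V_def by auto
      fix x assume "x \<in> V"
      hence "x \<in> carrier G \<and> (\<exists>F''. finite F'' \<and> F'' \<subseteq> F \<and> (\<lambda>h. x \<otimes> h) ` DD G act F F'' \<subseteq> U)"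
        unfolding V_def by simp
      then obtain F'' where x: "x \<in> carrier G" "finite F''" "F'' \<subseteq> F" "(\<lambda>h. x \<otimes> h) ` DD G act F F'' \<subseteq> U"
        by blast
      have "(\<lambda>h. x \<otimes> h) ` DD G act F F'' \<subseteq> V"
      proof
        fix y assume "y \<in> (\<lambda>h. x \<otimes> h) ` DD G act F F''"
        then obtain d where d: "d \<in> DD G act F F''" "y = x \<otimes> d" by auto
        have dc: "d \<in> carrier G" using d DD_carrier by auto
        obtain F3 where F3: "finite F3" "F3 \<subseteq> F" "(\<lambda>h. d \<otimes> h) ` DD G act F F3 \<subseteq> DD G act F F''"
          using DD_shift[OF assms(1,2) x(2,3) d(1)] by blast
        have "(\<lambda>h. y \<otimes> h) ` DD G act F F3 \<subseteq> U"
        proof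
          fix z assume "z \<in> (\<lambda>h. y \<otimes> h) ` DD G act F F3"
          then obtain h where h: "h \<in> DD G act F F3" "z = y \<otimes> h" by auto
          have hc: "h \<in> carrier G" using h DD_carrier by auto
          have "z = x \<otimes> (d \<otimes> h)" using h d hc dc x by (simp add: m_assoc)
          moreover have "d \<otimes> h \<in> DD G act F F''" using F3(3) h by auto
          ultimately show "z \<in> U" using x(4) by auto
        qed
        thus "y \<in> V" unfolding V_def using d dc x F3 by auto
      qed
      thus "\<exists>F'. finite F' \<and> F' \<subseteq> F \<and> (\<lambda>h. x \<otimes> h) ` DD G act F F' \<subseteq> V" using x by blast
    qed
    ultimately have "\<exists>V. openin T V \<and> \<one> \<in> V \<and> V \<subseteq> U" by blast
    thus "U \<in> {U. U \<subseteq> carrier G \<and> (\<exists>V. openin T V \<and> \<one> \<in> V \<and> V \<subseteq> U)}" using U(1) by blast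
  next
    fix U assume "U \<in> {U. U \<subseteq> carrier G \<and> (\<exists>V. openin T V \<and> \<one> \<in> V \<and> V \<subseteq> U)}"
    then obtain V where U: "U \<subseteq> carrier G" "openin T V" "\<one> \<in> V" "V \<subseteq> U" by blast
    have PV: "P V" using U openT by blast
    obtain F' where F': "finite F'" "F' \<subseteq> F" "(\<lambda>h. \<one> \<otimes> h) ` DD G act F F' \<subseteq> V"
      by (rule PD[OF PV U(3)])
    have "DD G act F F' \<subseteq> U"
    proof
      fix h assume "h \<in> DD G act F F'"
      moreover hence "h \<in> carrier G" using DD_carrier by auto
      ultimately show "h \<in> U" using F'(3) U(4) by force
    qed
    thus "U \<in> {U. U \<subseteq> carrier G \<and> (\<exists>F'. finite F' \<and> F' \<subseteq> F \<and> DD G act F F' \<subseteq> U)}" using F' U(1) by blast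
  qed
  show ?thesis unfolding left_topological_def
    using topsp cont eq by blast
qed

end
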